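(* Let $m\in\{1,2\}$, $K>0$, $\gamma=3$, and let $(\rho,u)$ be a smooth solution ($\rho>0$, $r>0$) of the radially symmetric isentropic Euler equations $$(r^m\rho)_t+(r^m\rho u)_r=0,\qquad (r^m\rho u)_t+(r^m\rho u^2)_r+r^m p_r=0,\qquad p=K\rho^\gamma,$$ in the supersonic inward regime $c_1<c_2<0$. Then: (i) If the 1-wave is rarefaction (R), the 2-wave can only change from R to compression (C); if the 2-wave is R, the 1-wave can only change from R to C. (ii) If the 1-wave is C, the 2-wave can only change from C to R; if the 2-wave is C, the 1-wave can only change from C to R.
   Context: Here $h=\sqrt{K\gamma}\,\rho^{(\gamma-1)/2}$, $c_1=u-h$, $c_2=u+h$, and $$\alpha=u_r+\tfrac{2}{\gamma-1}h_r+\tfrac{m}{r}\tfrac{hu}{c_2},\qquad \beta=u_r-\tfrac{2}{\gamma-1}h_r-\tfrac{m}{r}\tfrac{hu}{c_1}.$$ The 1-wave is rarefaction (compression) at a point if $\beta>0$ ($\beta<0$); the 2-wave is rarefaction (compression) if $\alpha>0$ ($\alpha<0$). Characteristic flow maps: $\partial_t\xi(r_0,t)=c_1(\xi(r_0,t),t)$, $\partial_t\psi(r_0,t)=c_2(\psi(r_0,t),t)$, $\xi(r_0,0)=\psi(r_0,0)=r_0$. A change of the 2-wave from C to R means there are $r_0,t^*,\varepsilon>0$ such that $g(t)=\alpha(\psi(r_0,t),t)$ satisfies $g(t^* )=0$, $g<0$ on $(t^*-\varepsilon,t^* )$, $g>0$ on $(t^*,t^*+\varepsilon)$ (from R to C: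 opposite signs); a change of the 1-wave is defined likewise with $\beta(\xi(r_0,t),t)$. "If the 1-wave is R then the 2-wave can only change from R to C" means no C-to-R change of the 2-wave occurs at a time $t^*$ where the 1-wave is R at the crossing point; the other items are interpreted analogously. *)

theory Defs
  imports "HOL-Analysis.Analysis"
begin

definition pr :: "(real \<times> real \<Rightarrow> real) \<Rightarrow> real \<times> real \<Rightarrow> real" where
  "pr f = (\<lambda>(r, t). deriv (\<lambda>s. f (s, t)) r)"

definition pt :: "(real \<times> real \<Rightarrow> real) \<Rightarrow> real \<times> real \<Rightarrow> real" where
  "pt f = (\<lambda>(r, t). deriv (\<lambda>s. f (r, s)) t)"

fun dpar :: "bool list \<Rightarrow> (real \<times> real \<Rightarrow> real) \<Rightarrow> real \<times> real \<Rightarrow> real" where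
  "dpar [] f = f"
| "dpar (b # bs) f = (if b then pr (dpar bs f) else pt (dpar bs f))"

definition smooth_on :: "(real \<times> real) set \<Rightarrow> (real \<times> real \<Rightarrow> real) \<Rightarrow> bool" where
  "smooth_on \<Omega> f \<longleftrightarrow> (\<forall>bs. dpar bs f differentiable_on \<Omega>)"

definition euler_solution ::
  "nat \<Rightarrow> real \<Rightarrow> real \<Rightarrow> (real \<times> real) set \<Rightarrow> (real \<times> real \<Rightarrow> real) \<Rightarrow> (real \<times> real \<Rightarrow> real) \<Rightarrow> bool" where
  "euler_solution m K \<gamma> \<Omega> \<rho> u \<longleftrightarrow>
     open \<Omega> \<and> (\<forall>z\<in>\<Omega>. fst z > 0 \<and> \<rho> z > 0) \<and> smooth_on \<Omega> \<rho> \<and> smooth_on \<Omega> u \<and>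
     (\<forall>z\<in>\<Omega>.
        pt (\<lambda>(r, t). r ^ m * \<rho> (r, t)) z + pr (\<lambda>(r, t). r ^ m * \<rho> (r, t) * u (r, t)) z = 0 \<and>
        pt (\<lambda>(r, t). r ^ m * \<rho> (r, t) * u (r, t)) z
          + pr (\<lambda>(r, t). r ^ m * \<rho> (r, t) * (u (r, t))\<^sup>2) z
          + (fst z) ^ m * pr (\<lambda>w. K * \<rho> w powr \<gamma>) z = 0)"

definition hh :: "real \<Rightarrow> real \<Rightarrow> (real \<times> real \<Rightarrow> real) \<Rightarrow> real \<times> real \<Rightarrow> real" where
  "hh K \<gamma> \<rho> = (\<lambda>z. sqrt (K * \<gamma>) * \<rho> z powr ((\<gamma> - 1) / 2))"

definition c1 :: "real \<Rightarrow> real \<Rightarrow> (real \<times> real \<Rightarrow> real) \<Rightarrow> (real \<times> real \<Rightarrow> real) \<Rightarrow> real \<times> real \<Rightarrow> real" where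
  "c1 K \<gamma> \<rho> u = (\<lambda>z. u z - hh K \<gamma> \<rho> z)"

definition c2 :: "real \<Rightarrow> real \<Rightarrow> (real \<times> real \<Rightarrow> real) \<Rightarrow> (real \<times> real \<Rightarrow> real) \<Rightarrow> real \<times> real \<Rightarrow> real" where
  "c2 K \<gamma> \<rho> u = (\<lambda>z. u z + hh K \<gamma> \<rho> z)"

definition alpha :: "nat \<Rightarrow> real \<Rightarrow> real \<Rightarrow> (real \<times> real \<Rightarrow> real) \<Rightarrow> (real \<times> real \<Rightarrow> real) \<Rightarrow> real \<times> real \<Rightarrow> real" where
  "alpha m K \<gamma> \<rho> u = (\<lambda>z. pr u z + 2 / (\<gamma> - 1) * pr (hh K \<gamma> \<rho>) z
      + real m / fst z * (hh K \<gamma> \<rho> z * u z / c2 K \<gamma> \<rho> u z))"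

definition beta :: "nat \<Rightarrow> real \<Rightarrow> real \<Rightarrow> (real \<times> real \<Rightarrow> real) \<Rightarrow> (real \<times> real \<Rightarrow> real) \<Rightarrow> real \<times> real \<Rightarrow> real" where
  "beta m K \<gamma> \<rho> u = (\<lambda>z. pr u z - 2 / (\<gamma> - 1) * pr (hh K \<gamma> \<rho>) z
      - real m / fst z * (hh K \<gamma> \<rho> z * u z / c1 K \<gamma> \<rho> u z))"

text \<open>psi is a characteristic curve of speed c on the time interval J, starting at r0
  at time 0 (i.e. t \<mapsto> psi t is the flow map t \<mapsto> psi(r0,t)), staying in the domain.\<close>
definition char_curve ::
  "(real \<times> real) set \<Rightarrow> (real \<times> real \<Rightarrow> real) \<Rightarrow> real set \<Rightarrow> real \<Rightarrow> (real \<Rightarrow> real) \<Rightarrow> bool" where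
  "char_curve \<Omega> c J r0 \<psi> \<longleftrightarrow> is_interval J \<and> 0 \<in> J \<and> \<psi> 0 = r0 \<and>
     (\<forall>t\<in>J. (\<psi> t, t) \<in> \<Omega> \<and> (\<psi> has_real_derivative c (\<psi> t, t)) (at t within J))"

definition change_C_to_R :: "(real \<Rightarrow> real) \<Rightarrow> real \<Rightarrow> real \<Rightarrow> bool" where
  "change_C_to_R g ts \<epsilon> \<longleftrightarrow> \<epsilon> > 0 \<and> g ts = 0 \<and>
     (\<forall>t\<in>{ts - \<epsilon><..<ts}. g t < 0) \<and> (\<forall>t\<in>{ts<..<ts + \<epsilon>}. g t > 0)"

definition change_R_to_C :: "(real \<Rightarrow> real) \<Rightarrow> real \<Rightarrow> real \<Rightarrow> bool" where
  "change_R_to_C g ts \<epsilon> \<longleftrightarrow> \<epsilon> > 0 \<and> g ts = 0 \<and>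
     (\<forall>t\<in>{ts - \<epsilon><..<ts}. g t > 0) \<and> (\<forall>t\<in>{ts<..<ts + \<epsilon>}. g t < 0)"

end

theory Submission
  imports Defs
begin


lemma lin2:
  fixes D :: "real \<times> real \<Rightarrow> real"
  assumes "linear D" shows "D (a, b) = a * D (1,0) + b * D (0,1)"
proof -
  have "(a, b) = a *\<^sub>R (1::real,0::real) + b *\<^sub>R (0,1)" by simp
  then have "D (a,b) = D (a *\<^sub>R (1::real,0::real) + b *\<^sub>R (0,1))" by simp
  also have "\<dots> = a * D (1,0) + b * D (0,1)"
    using linear_add[OF assms, of "a *\<^sub>R (1::real,0::real)" "b *\<^sub>R (0,1)"]
      linear_cmul[OF assms, of a "(1::real,0::real)"] linear_cmul[OF assms, of b "(0::real,1::real)"]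
    by simp
  finally show ?thesis .
qed

lemma partial_r:
  fixes f :: "real \<times> real \<Rightarrow> real"
  assumes "(f has_derivative D) (at (x,t))"
  shows "((\<lambda>s. f (s,t)) has_real_derivative D (1,0)) (at x)"
proof -
  have "((\<lambda>s. (s,t)) has_derivative (\<lambda>h. (h,0))) (at x)"
    by (auto intro!: derivative_eq_intros)
  from has_derivative_compose[OF this assms]
  have "((\<lambda>s. f (s,t)) has_derivative (\<lambda>h. D (h,0))) (at x)" by (simp add: o_def)
  moreover have "linear D" using assms has_derivative_linear by blast
  ultimately show ?thesis
  proof -
    assume a: "((\<lambda>s. f (s,t)) has_derivative (\<lambda>h. D (h,0))) (at x)" "linear D"
    have "(\<lambda>h. D (h,0)) = (*) (D (1,0))"
      by (rule ext, subst lin2[OF a(2)]) (simp add: algebra_simps)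
    with a show ?thesis by (simp add: has_field_derivative_def)
  qed
qed

lemma partial_t:
  fixes f :: "real \<times> real \<Rightarrow> real"
  assumes "(f has_derivative D) (at (x,t))"
  shows "((\<lambda>s. f (x,s)) has_real_derivative D (0,1)) (at t)"
proof -
  have "((\<lambda>s. (x,s)) has_derivative (\<lambda>h. (0,h))) (at t)"
    by (auto intro!: derivative_eq_intros)
  from has_derivative_compose[OF this assms]
  have "((\<lambda>s. f (x,s)) has_derivative (\<lambda>h. D (0,h))) (at t)" by (simp add: o_def)
  moreover have "linear D" using assms has_derivative_linear by blast
  ultimately show ?thesis
  proof -
    assume a: "((\<lambda>s. f (x,s)) has_derivative (\<lambda>h. D (0,h))) (at t)" "linear D"
    have "(\<lambda>h. D (0,h)) = (*) (D (0,1))"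
      by (rule ext, subst lin2[OF a(2)]) (simp add: algebra_simps)
    with a show ?thesis by (simp add: has_field_derivative_def)
  qed
qed

lemma pr_D:
  fixes f :: "real \<times> real \<Rightarrow> real"
  assumes "(f has_derivative D) (at (x,t))" shows "pr f (x,t) = D (1,0)"
  unfolding pr_def using DERIV_imp_deriv[OF partial_r[OF assms]] by simp

lemma pt_D:
  fixes f :: "real \<times> real \<Rightarrow> real"
  assumes "(f has_derivative D) (at (x,t))" shows "pt f (x,t) = D (0,1)"
  unfolding pt_def using DERIV_imp_deriv[OF partial_t[OF assms]] by simp

lemma pr_deriv:
  fixes f :: "real \<times> real \<Rightarrow> real"
  assumes "f differentiable (at (x,t))"
  shows "((\<lambda>s. f (s,t)) has_real_derivative pr f (x,t)) (at x)"
  using assms partial_r pr_D unfolding differentiable_def by metis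

lemma pt_deriv:
  fixes f :: "real \<times> real \<Rightarrow> real"
  assumes "f differentiable (at (x,t))"
  shows "((\<lambda>s. f (x,s)) has_real_derivative pt f (x,t)) (at t)"
  using assms partial_t pt_D unfolding differentiable_def by metis

lemma chain_curve:
  fixes f :: "real \<times> real \<Rightarrow> real"
  assumes "f differentiable (at (x,t))" and "(\<psi> has_real_derivative v) (at t)" and "\<psi> t = x"
  shows "((\<lambda>s. f (\<psi> s, s)) has_real_derivative pr f (x,t) * v + pt f (x,t)) (at t)"
proof -
  obtain D where D: "(f has_derivative D) (at (x,t))" using assms(1) unfolding differentiable_def by blast
  have "((\<lambda>s. (\<psi> s, s)) has_derivative (\<lambda>h. (h * v, h))) (at t)"
    using assms(2) unfolding has_field_derivative_def
    by (auto intro!: derivative_eq_intros simp: mult.commute)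
  from has_derivative_compose[OF this] D assms(3)
  have "((\<lambda>s. f (\<psi> s, s)) has_derivative (\<lambda>h. D (h * v, h))) (at t)" by (simp add: o_def)
  moreover have "linear D" using D has_derivative_linear by blast
  ultimately show ?thesis
  proof -
    assume a: "((\<lambda>s. f (\<psi> s, s)) has_derivative (\<lambda>h. D (h * v, h))) (at t)" "linear D"
    have "(\<lambda>h. D (h * v, h)) = (*) (D (1, 0) * v + D (0, 1))"
      by (rule ext, subst lin2[OF a(2)]) (simp add: algebra_simps)
    with a show ?thesis by (simp add: has_field_derivative_def pr_D[OF D] pt_D[OF D])
  qed
qed



lemma dist_pair_le: "dist (a::real, b::real) (x, t) \<le> \<bar>a - x\<bar> + \<bar>b - t\<bar>"
  using sqrt_sum_squares_le_sum_abs[of "dist a x" "dist b t"] by (simp add: dist_Pair_Pair dist_real_def)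

lemma schwarz:
  fixes f :: "real \<times> real \<Rightarrow> real"
  assumes O: "open \<Omega>" and z: "(x,t) \<in> \<Omega>"
    and d0: "f differentiable_on \<Omega>" and d1: "pr f differentiable_on \<Omega>" and d2: "pt f differentiable_on \<Omega>"
    and c1: "isCont (pt (pr f)) (x,t)" and c2: "isCont (pr (pt f)) (x,t)"
  shows "pt (pr f) (x,t) = pr (pt f) (x,t)"
proof (rule ccontr)
  assume ne: "pt (pr f) (x,t) \<noteq> pr (pt f) (x,t)"
  define e where "e = \<bar>pt (pr f) (x,t) - pr (pt f) (x,t)\<bar> / 2"
  have e: "e > 0" using ne by (simp add: e_def)
  obtain \<delta> where \<delta>: "\<delta> > 0" "ball (x,t) \<delta> \<subseteq> \<Omega>" using O z open_contains_ball by blast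
  obtain da where da: "da > 0" "\<forall>p. dist p (x,t) < da \<longrightarrow> dist (pt (pr f) p) (pt (pr f) (x,t)) < e"
    using c1 e unfolding continuous_at_eps_delta by blast
  obtain db where db: "db > 0" "\<forall>p. dist p (x,t) < db \<longrightarrow> dist (pr (pt f) p) (pr (pt f) (x,t)) < e"
    using c2 e unfolding continuous_at_eps_delta by blast
  define h where "h = min \<delta> (min da db) / 4"
  have h: "h > 0" using \<delta> da db by (simp add: h_def)
  have sq: "(a,b) \<in> \<Omega> \<and> dist (a,b) (x,t) < da \<and> dist (a,b) (x,t) < db"
    if "x \<le> a" "a \<le> x + h" "t \<le> b" "b \<le> t + h" for a b
  proof -
    have "dist (a,b) (x,t) \<le> 2*h" using dist_pair_le[of a b x t] that by simp
    moreover have "2*h < \<delta>" "2*h < da" "2*h < db" using h \<delta> da db unfolding h_def by auto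
    ultimately show ?thesis using \<delta>(2) by (auto simp: dist_commute)
  qed
  have dat: "g differentiable at (a,b)" if "g differentiable_on \<Omega>" "(a,b) \<in> \<Omega>" for g a b
    using that O differentiable_on_eq_differentiable_at by blast
  have "\<exists>\<sigma>>x. \<sigma> < x + h \<and> (\<lambda>s. f (s,t+h) - f (s,t)) (x+h) - (\<lambda>s. f (s,t+h) - f (s,t)) x
        = (x + h - x) * (pr f (\<sigma>,t+h) - pr f (\<sigma>,t))"
    using h by (intro MVT2) (auto intro!: DERIV_diff pr_deriv dat[OF d0] dest: sq intro: sq[THEN conjunct1])
  then obtain \<sigma> where \<sigma>: "x < \<sigma>" "\<sigma> < x + h"
    "f (x+h,t+h) - f (x+h,t) - (f (x,t+h) - f (x,t)) = h * (pr f (\<sigma>,t+h) - pr f (\<sigma>,t))" by auto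
  have "\<exists>\<tau>>t. \<tau> < t + h \<and> (\<lambda>s. pr f (\<sigma>,s)) (t+h) - (\<lambda>s. pr f (\<sigma>,s)) t = (t + h - t) * pt (pr f) (\<sigma>,\<tau>)"
    using h \<sigma> by (intro MVT2) (auto intro!: pt_deriv dat[OF d1] sq[THEN conjunct1])
  then obtain \<tau> where \<tau>: "t < \<tau>" "\<tau> < t + h" "pr f (\<sigma>,t+h) - pr f (\<sigma>,t) = h * pt (pr f) (\<sigma>,\<tau>)" by auto
  have "\<exists>\<tau>>t. \<tau> < t + h \<and> (\<lambda>s. f (x+h,s) - f (x,s)) (t+h) - (\<lambda>s. f (x+h,s) - f (x,s)) t
        = (t + h - t) * (pt f (x+h,\<tau>) - pt f (x,\<tau>))"
    using h by (intro MVT2) (auto intro!: DERIV_diff pt_deriv dat[OF d0] dest: sq intro: sq[THEN conjunct1])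
  then obtain \<tau>' where \<tau>': "t < \<tau>'" "\<tau>' < t + h"
    "f (x+h,t+h) - f (x,t+h) - (f (x+h,t) - f (x,t)) = h * (pt f (x+h,\<tau>') - pt f (x,\<tau>'))" by auto
  have "\<exists>\<sigma>>x. \<sigma> < x + h \<and> (\<lambda>s. pt f (s,\<tau>')) (x+h) - (\<lambda>s. pt f (s,\<tau>')) x = (x + h - x) * pr (pt f) (\<sigma>,\<tau>')"
    using h \<tau>' by (intro MVT2) (auto intro!: pr_deriv dat[OF d2] sq[THEN conjunct1])
  then obtain \<sigma>' where \<sigma>': "x < \<sigma>'" "\<sigma>' < x + h" "pt f (x+h,\<tau>') - pt f (x,\<tau>') = h * pr (pt f) (\<sigma>',\<tau>')" by auto
  have "h * (h * pt (pr f) (\<sigma>,\<tau>)) = h * (h * pr (pt f) (\<sigma>',\<tau>'))"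
    using \<sigma>(3) \<tau>(3) \<tau>'(3) \<sigma>'(3) by (simp add: algebra_simps)
  then have eq: "pt (pr f) (\<sigma>,\<tau>) = pr (pt f) (\<sigma>',\<tau>')" using h by simp
  have "dist (pt (pr f) (\<sigma>,\<tau>)) (pt (pr f) (x,t)) < e"
    using da(2) sq[of \<sigma> \<tau>] \<sigma> \<tau> by auto
  moreover have "dist (pr (pt f) (\<sigma>',\<tau>')) (pr (pt f) (x,t)) < e"
    using db(2) sq[of \<sigma>' \<tau>'] \<sigma>' \<tau>' by auto
  moreover have "\<And>a p q::real. \<bar>a - p\<bar> < \<bar>p - q\<bar> / 2 \<Longrightarrow> \<bar>a - q\<bar> < \<bar>p - q\<bar> / 2 \<Longrightarrow> False"
    by (auto simp: abs_if split: if_splits)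
  ultimately show False using eq unfolding e_def dist_real_def by metis
qed


lemma smooth_diff:
  assumes "smooth_on \<Omega> f" "open \<Omega>" "z \<in> \<Omega>"
  shows "f differentiable (at z)" "pr f differentiable (at z)" "pt f differentiable (at z)"
    "pr (pr f) differentiable (at z)" "pt (pr f) differentiable (at z)" "pr (pt f) differentiable (at z)"
proof -
  have "\<And>bs. dpar bs f differentiable (at z)"
    using assms differentiable_on_eq_differentiable_at unfolding smooth_on_def by blast
  from this[of "[]"] this[of "[True]"] this[of "[False]"] this[of "[True,True]"] this[of "[False,True]"]
    this[of "[True,False]"]
  show "f differentiable (at z)" "pr f differentiable (at z)" "pt f differentiable (at z)"
    "pr (pr f) differentiable (at z)" "pt (pr f) differentiable (at z)" "pr (pt f) differentiable (at z)"
    by simp_all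
qed

lemma smooth_schwarz:
  assumes "smooth_on \<Omega> f" "open \<Omega>" "(x,t) \<in> \<Omega>"
  shows "pt (pr f) (x,t) = pr (pt f) (x,t)"
proof (rule schwarz[OF assms(2,3)])
  have "\<And>bs. dpar bs f differentiable_on \<Omega>" using assms unfolding smooth_on_def by blast
  from this[of "[]"] this[of "[True]"] this[of "[False]"]
  show "f differentiable_on \<Omega>" "pr f differentiable_on \<Omega>" "pt f differentiable_on \<Omega>" by simp_all
  show "isCont (pt (pr f)) (x, t)" "isCont (pr (pt f)) (x, t)"
    using smooth_diff[OF assms] differentiable_imp_continuous_within by blast+
qed

lemma ev_r:
  fixes x t :: real
  assumes "open \<Omega>" "(x,t) \<in> \<Omega>"
  shows "eventually (\<lambda>s. (s,t) \<in> \<Omega>) (nhds x)"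
proof -
  obtain d where d: "d > 0" "ball (x,t) d \<subseteq> \<Omega>" using assms open_contains_ball by blast
  show ?thesis unfolding eventually_nhds_metric
    using d by (intro exI[of _ d]) (auto simp: dist_Pair_Pair dist_commute subset_iff)
qed



lemma prpt_u:
  fixes u \<rho> :: "real \<times> real \<Rightarrow> real"
  assumes O: "open \<Omega>" and su: "smooth_on \<Omega> u" and sr: "smooth_on \<Omega> \<rho>" and z: "(x,t) \<in> \<Omega>"
    and P2: "\<forall>z\<in>\<Omega>. pt u z = -(u z * pr u z + C * \<rho> z * pr \<rho> z)"
  shows "pr (pt u) (x,t) = -(pr u (x,t)^2 + u (x,t) * pr (pr u) (x,t) + C * (pr \<rho> (x,t)^2 + \<rho> (x,t) * pr (pr \<rho>) (x,t)))"
proof -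
  note U = smooth_diff[OF su O z] and R = smooth_diff[OF sr O z]
  have d: "((\<lambda>s. pt u (s,t)) has_real_derivative pr (pt u) (x,t)) (at x)" by (rule pr_deriv[OF U(3)])
  have e: "eventually (\<lambda>s. pt u (s,t) = -(u (s,t) * pr u (s,t) + C * \<rho> (s,t) * pr \<rho> (s,t))) (nhds x)"
    using ev_r[OF O z] by eventually_elim (use P2 in auto)
  have d2: "((\<lambda>s. -(u (s,t) * pr u (s,t) + C * \<rho> (s,t) * pr \<rho> (s,t))) has_real_derivative
     -(pr u (x,t)^2 + u (x,t) * pr (pr u) (x,t) + C * (pr \<rho> (x,t)^2 + \<rho> (x,t) * pr (pr \<rho>) (x,t)))) (at x)"
    by (rule derivative_eq_intros pr_deriv U R refl)+ (simp add: algebra_simps power2_eq_square)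
  have "((\<lambda>s. -(u (s,t) * pr u (s,t) + C * \<rho> (s,t) * pr \<rho> (s,t))) has_real_derivative pr (pt u) (x,t)) (at x)"
    using d DERIV_cong_ev[OF refl e refl] by simp
  then show ?thesis using d2 DERIV_unique by blast
qed

lemma prpt_rho:
  fixes u \<rho> :: "real \<times> real \<Rightarrow> real"
  assumes O: "open \<Omega>" and su: "smooth_on \<Omega> u" and sr: "smooth_on \<Omega> \<rho>" and z: "(x,t) \<in> \<Omega>"
    and pos: "\<forall>z\<in>\<Omega>. fst z > 0"
    and P1: "\<forall>z\<in>\<Omega>. pt \<rho> z = -(pr \<rho> z * u z + \<rho> z * pr u z + m * \<rho> z * u z / fst z)"
  shows "pr (pt \<rho>) (x,t) = -(pr (pr \<rho>) (x,t) * u (x,t) + 2 * pr \<rho> (x,t) * pr u (x,t) + \<rho> (x,t) * pr (pr u) (x,t)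
      + m * (pr \<rho> (x,t) * u (x,t) + \<rho> (x,t) * pr u (x,t)) / x - m * \<rho> (x,t) * u (x,t) / x^2)"
proof -
  note U = smooth_diff[OF su O z] and R = smooth_diff[OF sr O z]
  have x: "x > 0" using pos z by auto
  have d: "((\<lambda>s. pt \<rho> (s,t)) has_real_derivative pr (pt \<rho>) (x,t)) (at x)" by (rule pr_deriv[OF R(3)])
  have e: "eventually (\<lambda>s. pt \<rho> (s,t) = -(pr \<rho> (s,t) * u (s,t) + \<rho> (s,t) * pr u (s,t) + m * \<rho> (s,t) * u (s,t) / s)) (nhds x)"
    using ev_r[OF O z] by eventually_elim (use P1 in auto)
  have d2: "((\<lambda>s. -(pr \<rho> (s,t) * u (s,t) + \<rho> (s,t) * pr u (s,t) + m * \<rho> (s,t) * u (s,t) / s)) has_real_derivative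
     -(pr (pr \<rho>) (x,t) * u (x,t) + 2 * pr \<rho> (x,t) * pr u (x,t) + \<rho> (x,t) * pr (pr u) (x,t)
      + m * (pr \<rho> (x,t) * u (x,t) + \<rho> (x,t) * pr u (x,t)) / x - m * \<rho> (x,t) * u (x,t) / x^2)) (at x)"
    using x by (auto intro!: derivative_eq_intros pr_deriv U R simp: field_simps power2_eq_square)
  have "((\<lambda>s. -(pr \<rho> (s,t) * u (s,t) + \<rho> (s,t) * pr u (s,t) + m * \<rho> (s,t) * u (s,t) / s)) has_real_derivative pr (pt \<rho>) (x,t)) (at x)"
    using d DERIV_cong_ev[OF refl e refl] by simp
  then show ?thesis using d2 DERIV_unique by blast
qed


lemma alg:
  fixes K c r rho u R1 U1 Urr Rrr Ut Rt Urt Rrt :: real and m :: real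
  assumes r: "r \<noteq> 0" and w: "u + c*rho \<noteq> 0" and z: "u - c*rho \<noteq> 0"
    and U1: "U1 + c*R1 + m/r*(c*rho*u/(u+c*rho)) = 0"
    and Ut: "Ut = -(u*U1+c^2*rho*R1)" and Rt: "Rt = -(R1*u+rho*U1+m*rho*u/r)"
    and Urt: "Urt = -(U1^2+u*Urr+c^2*(R1^2+rho*Rrr))"
    and Rrt: "Rrt = -(Rrr*u+2*R1*U1+rho*Urr+m*(R1*u+rho*U1)/r-m*rho*u/r^2)"
  shows "Urr*(u+c*rho)+Urt+c*(Rrr*(u+c*rho)+Rrt)+m*(-(u+c*rho)/r^2)*(c*rho*u/(u+c*rho))
     + (m/r)*(c*((R1*(u+c*rho)+Rt)*u+rho*(U1*(u+c*rho)+Ut))/(u+c*rho)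
          - c*rho*u*((U1*(u+c*rho)+Ut)+c*(R1*(u+c*rho)+Rt))/(u+c*rho)^2)
     = m*(u-c*rho)^2*(U1-c*R1-m/r*(c*rho*u/(u-c*rho)))/(2*r*(u+c*rho))"
proof -
  define w where "w = u + c*rho"
  have ue: "u = w - c*rho" by (simp add: w_def)
  have w': "w \<noteq> 0" using w by (simp add: w_def)
  have z': "w - 2*c*rho \<noteq> 0" using z by (simp add: w_def)
  have U1': "U1 = -c*R1 - m*c*rho*(w - c*rho)/(r*w)" using U1 r w' unfolding ue
    by (simp add: field_simps)
  show ?thesis unfolding Ut Rt Urt Rrt U1' unfolding ue using r w' z'
    apply (simp add: field_simps) by algebra
qed

lemma quot_alg: fixes W :: real assumes "W \<noteq> 0"
  shows "((c*Dp*Q + c*P*Dq) * W - c*P*Q*(Dq + c*Dp)) / (W*W) = c*(Dp*Q+P*Dq)/W - c*P*Q*(Dq + c*Dp)/W^2"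
  using assms by (simp add: field_simps power2_eq_square)

lemma deriv_G:
  fixes a b p q \<psi> :: "real \<Rightarrow> real"
  assumes da: "(a has_real_derivative Da) (at ts)" and db: "(b has_real_derivative Db) (at ts)"
    and dp: "(p has_real_derivative Dp) (at ts)" and dq: "(q has_real_derivative Dq) (at ts)"
    and dv: "(\<psi> has_real_derivative v) (at ts)" and x: "\<psi> ts = x" "x \<noteq> 0"
    and w: "q ts + c * p ts \<noteq> 0"
  shows "((\<lambda>t. a t + c*b t + m/\<psi> t*(c*p t*q t/(q t + c*p t))) has_real_derivative
     Da + c*Db + m*(-v/x^2)*(c*p ts*q ts/(q ts + c*p ts))
     + (m/x)*(c*(Dp*q ts+p ts*Dq)/(q ts+c*p ts) - c*p ts*q ts*(Dq + c*Dp)/(q ts + c*p ts)^2)) (at ts)"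
proof -
  have d1: "((\<lambda>t. m / \<psi> t) has_real_derivative m*(-v/x^2)) (at ts)"
    using DERIV_divide[OF DERIV_const[of m] dv] x by (simp add: power2_eq_square)
  have d2: "((\<lambda>t. c*p t*q t/(q t + c*p t)) has_real_derivative
      c*(Dp*q ts+p ts*Dq)/(q ts+c*p ts) - c*p ts*q ts*(Dq + c*Dp)/(q ts + c*p ts)^2) (at ts)"
  proof -
    have "((\<lambda>t. c*p t*q t/(q t + c*p t)) has_real_derivative
      ((c*Dp*q ts + c*p ts*Dq) * (q ts + c*p ts) - c*p ts*q ts*(Dq + c*Dp)) / ((q ts + c*p ts)*(q ts + c*p ts))) (at ts)"
      using DERIV_divide[OF DERIV_mult[OF DERIV_cmult[OF dp, of c] dq] DERIV_add[OF dq DERIV_cmult[OF dp, of c]] w]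
      by (simp add: algebra_simps)
    moreover have "((c*Dp*q ts + c*p ts*Dq) * (q ts + c*p ts) - c*p ts*q ts*(Dq + c*Dp)) / ((q ts + c*p ts)*(q ts + c*p ts))
       = c*(Dp*q ts+p ts*Dq)/(q ts+c*p ts) - c*p ts*q ts*(Dq + c*Dp)/(q ts + c*p ts)^2"
      using quot_alg[OF w] .
    ultimately show ?thesis by simp
  qed
  have "((\<lambda>t. a t + c*b t + m/\<psi> t*(c*p t*q t/(q t + c*p t))) has_real_derivative
     Da + c*Db + (m*(-v/x^2)*(c*p ts*q ts/(q ts + c*p ts)) + (c*(Dp*q ts+p ts*Dq)/(q ts+c*p ts) - c*p ts*q ts*(Dq + c*Dp)/(q ts + c*p ts)^2) * (m / \<psi> ts))) (at ts)"
    using DERIV_add[OF DERIV_add[OF da DERIV_cmult[OF db, of c]] DERIV_mult[OF d1 d2]] by simp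
  then show ?thesis using x by (simp add: algebra_simps)
qed


lemma core:
  fixes u \<rho> :: "real \<times> real \<Rightarrow> real" and \<psi> :: "real \<Rightarrow> real" and m c :: real
  assumes O: "open \<Omega>" and pos: "\<forall>z\<in>\<Omega>. fst z > 0" and su: "smooth_on \<Omega> u" and sr: "smooth_on \<Omega> \<rho>"
    and P1: "\<forall>z\<in>\<Omega>. pt \<rho> z = -(pr \<rho> z * u z + \<rho> z * pr u z + m * \<rho> z * u z / fst z)"
    and P2: "\<forall>z\<in>\<Omega>. pt u z = -(u z * pr u z + c^2 * \<rho> z * pr \<rho> z)"
    and z0: "(\<psi> ts, ts) \<in> \<Omega>"
    and d\<psi>: "(\<psi> has_real_derivative (u (\<psi> ts,ts) + c*\<rho> (\<psi> ts,ts))) (at ts)"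
    and w: "u (\<psi> ts,ts) + c*\<rho> (\<psi> ts,ts) \<noteq> 0" and z: "u (\<psi> ts,ts) - c*\<rho> (\<psi> ts,ts) \<noteq> 0"
    and A0: "pr u (\<psi> ts,ts) + c*pr \<rho> (\<psi> ts,ts) + m/\<psi> ts*(c*\<rho> (\<psi> ts,ts)*u (\<psi> ts,ts)/(u (\<psi> ts,ts) + c*\<rho> (\<psi> ts,ts))) = 0"
  shows "((\<lambda>t. pr u (\<psi> t,t) + c*pr \<rho> (\<psi> t,t) + m/\<psi> t*(c*\<rho> (\<psi> t,t)*u (\<psi> t,t)/(u (\<psi> t,t) + c*\<rho> (\<psi> t,t))))
     has_real_derivative
      m*(u (\<psi> ts,ts) - c*\<rho> (\<psi> ts,ts))^2*(pr u (\<psi> ts,ts) - c*pr \<rho> (\<psi> ts,ts)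
        - m/\<psi> ts*(c*\<rho> (\<psi> ts,ts)*u (\<psi> ts,ts)/(u (\<psi> ts,ts) - c*\<rho> (\<psi> ts,ts))))/(2*\<psi> ts*(u (\<psi> ts,ts)+c*\<rho> (\<psi> ts,ts)))) (at ts)"
proof -
  obtain x where x: "\<psi> ts = x" by blast
  have zx: "(x,ts) \<in> \<Omega>" using z0 x by simp
  have xpos: "x > 0" using pos zx by auto
  note U = smooth_diff[OF su O zx] and R = smooth_diff[OF sr O zx]
  have dv0: "(\<psi> has_real_derivative (u (x,ts) + c*\<rho> (x,ts))) (at ts)" using d\<psi> x by simp
  note d1 = chain_curve[OF U(2) dv0 x]
  note d2 = chain_curve[OF R(2) dv0 x]
  note d3 = chain_curve[OF R(1) dv0 x]
  note d4 = chain_curve[OF U(1) dv0 x]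
  let ?u = "u (x,ts)" and ?r = "\<rho> (x,ts)" and ?U1 = "pr u (x,ts)" and ?R1 = "pr \<rho> (x,ts)"
  let ?Urr = "pr (pr u) (x,ts)" and ?Rrr = "pr (pr \<rho>) (x,ts)" and ?Urt = "pt (pr u) (x,ts)"
  let ?Rrt = "pt (pr \<rho>) (x,ts)" and ?Ut = "pt u (x,ts)" and ?Rt = "pt \<rho> (x,ts)"
  have wx: "?u + c*?r \<noteq> 0" and zx': "?u - c*?r \<noteq> 0" using w z x by auto
  have raw: "((\<lambda>t. pr u (\<psi> t,t) + c*pr \<rho> (\<psi> t,t) + m/\<psi> t*(c*\<rho> (\<psi> t,t)*u (\<psi> t,t)/(u (\<psi> t,t) + c*\<rho> (\<psi> t,t))))
     has_real_derivative
     ?Urr*(?u+c*?r)+?Urt+c*(?Rrr*(?u+c*?r)+?Rrt)+m*(-(?u+c*?r)/x^2)*(c*?r*?u/(?u+c*?r))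
     + (m/x)*(c*((?R1*(?u+c*?r)+?Rt)*?u+?r*(?U1*(?u+c*?r)+?Ut))/(?u+c*?r)
          - c*?r*?u*((?U1*(?u+c*?r)+?Ut)+c*(?R1*(?u+c*?r)+?Rt))/(?u+c*?r)^2)) (at ts)"
  proof -
    have dv: "(\<psi> has_real_derivative (?u + c*?r)) (at ts)" using d\<psi> x by simp
    have xne: "x \<noteq> 0" using xpos by simp
    note r = deriv_G[OF d1 d2 d3 d4 dv0 x xne w]
    show ?thesis using r unfolding x by simp
  qed
  have Urt: "?Urt = -(?U1^2+?u*?Urr+c^2*(?R1^2+?r*?Rrr))"
    using smooth_schwarz[OF su O zx] prpt_u[OF O su sr zx P2] by simp
  have Rrt: "?Rrt = -(?Rrr*?u+2*?R1*?U1+?r*?Urr+m*(?R1*?u+?r*?U1)/x-m*?r*?u/x^2)"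
    using smooth_schwarz[OF sr O zx] prpt_rho[OF O su sr zx pos P1] by (simp add: algebra_simps)
  have Ut: "?Ut = -(?u*?U1+c^2*?r*?R1)" using P2 zx by (simp add: algebra_simps)
  have Rt: "?Rt = -(?R1*?u+?r*?U1+m*?r*?u/x)" using bspec[OF P1 zx] by (simp add: algebra_simps)
  have A0': "?U1 + c*?R1 + m/x*(c*?r*?u/(?u+c*?r)) = 0" using A0 x by simp
  have eq: "?Urr*(?u+c*?r)+?Urt+c*(?Rrr*(?u+c*?r)+?Rrt)+m*(-(?u+c*?r)/x^2)*(c*?r*?u/(?u+c*?r))
     + (m/x)*(c*((?R1*(?u+c*?r)+?Rt)*?u+?r*(?U1*(?u+c*?r)+?Ut))/(?u+c*?r)
          - c*?r*?u*((?U1*(?u+c*?r)+?Ut)+c*(?R1*(?u+c*?r)+?Rt))/(?u+c*?r)^2)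
     = m*(?u-c*?r)^2*(?U1-c*?R1-m/x*(c*?r*?u/(?u-c*?r)))/(2*x*(?u+c*?r))"
    by (rule alg[OF _ wx zx' A0' Ut Rt Urt Rrt]) (use xpos in simp)
  show ?thesis using raw unfolding eq x .
qed



lemma deriv_ev:
  fixes f g :: "real \<Rightarrow> real"
  assumes "eventually (\<lambda>s. f s = g s) (nhds x)" "(g has_real_derivative D) (at x)"
  shows "deriv f x = D"
  using DERIV_cong_ev[OF refl assms(1) refl] assms(2) DERIV_imp_deriv by blast

lemma pde_reduce:
  fixes u \<rho> :: "real \<times> real \<Rightarrow> real" and m :: nat
  assumes O: "open \<Omega>" and z: "(x,t) \<in> \<Omega>" and pos: "\<forall>z\<in>\<Omega>. fst z > 0 \<and> \<rho> z > 0"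
    and su: "smooth_on \<Omega> u" and sr: "smooth_on \<Omega> \<rho>"
    and E1: "pt (\<lambda>(r, t). r ^ m * \<rho> (r, t)) (x,t) + pr (\<lambda>(r, t). r ^ m * \<rho> (r, t) * u (r, t)) (x,t) = 0"
    and E2: "pt (\<lambda>(r, t). r ^ m * \<rho> (r, t) * u (r, t)) (x,t)
          + pr (\<lambda>(r, t). r ^ m * \<rho> (r, t) * (u (r, t))\<^sup>2) (x,t)
          + (fst (x,t)) ^ m * pr (\<lambda>w. K * \<rho> w powr (3::real)) (x,t) = 0"
  shows "pt \<rho> (x,t) = -(pr \<rho> (x,t) * u (x,t) + \<rho> (x,t) * pr u (x,t) + real m * \<rho> (x,t) * u (x,t) / x)"
    and "pt u (x,t) = -(u (x,t) * pr u (x,t) + 3 * K * \<rho> (x,t) * pr \<rho> (x,t))"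
proof -
  note U = smooth_diff[OF su O z] and R = smooth_diff[OF sr O z]
  have x: "x > 0" and r: "\<rho> (x,t) > 0" using pos z by auto
  have dUr: "((\<lambda>s. u (s,t)) has_real_derivative pr u (x,t)) (at x)" by (rule pr_deriv[OF U(1)])
  have dRr: "((\<lambda>s. \<rho> (s,t)) has_real_derivative pr \<rho> (x,t)) (at x)" by (rule pr_deriv[OF R(1)])
  have dUt: "((\<lambda>s. u (x,s)) has_real_derivative pt u (x,t)) (at t)" by (rule pt_deriv[OF U(1)])
  have dRt: "((\<lambda>s. \<rho> (x,s)) has_real_derivative pt \<rho> (x,t)) (at t)" by (rule pt_deriv[OF R(1)])
  have a1: "pt (\<lambda>(r, t). r ^ m * \<rho> (r, t)) (x,t) = x^m * pt \<rho> (x,t)"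
  proof -
    have "deriv (\<lambda>s. x^m * \<rho> (x,s)) t = x^m * pt \<rho> (x,t)"
      by (rule DERIV_imp_deriv) (auto intro!: derivative_eq_intros dRt)
    then show ?thesis by (simp add: pt_def)
  qed
  have a2: "pr (\<lambda>(r, t). r ^ m * \<rho> (r, t) * u (r, t)) (x,t)
      = real m * x^(m-1) * \<rho> (x,t) * u (x,t) + x^m * (pr \<rho> (x,t) * u (x,t) + \<rho> (x,t) * pr u (x,t))"
  proof -
    have "deriv (\<lambda>s. s^m * \<rho> (s,t) * u (s,t)) x = real m * x^(m-1) * \<rho> (x,t) * u (x,t) + x^m * (pr \<rho> (x,t) * u (x,t) + \<rho> (x,t) * pr u (x,t))"
      by (rule DERIV_imp_deriv) (auto intro!: derivative_eq_intros dRr dUr simp: algebra_simps)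
    then show ?thesis by (simp add: pr_def)
  qed
  have a3: "pt (\<lambda>(r, t). r ^ m * \<rho> (r, t) * u (r, t)) (x,t) = x^m * (pt \<rho> (x,t) * u (x,t) + \<rho> (x,t) * pt u (x,t))"
  proof -
    have "deriv (\<lambda>s. x^m * \<rho> (x,s) * u (x,s)) t = x^m * (pt \<rho> (x,t) * u (x,t) + \<rho> (x,t) * pt u (x,t))"
      by (rule DERIV_imp_deriv) (auto intro!: derivative_eq_intros dRt dUt simp: algebra_simps)
    then show ?thesis by (simp add: pt_def)
  qed
  have a4: "pr (\<lambda>(r, t). r ^ m * \<rho> (r, t) * (u (r, t))\<^sup>2) (x,t)
      = real m * x^(m-1) * \<rho> (x,t) * (u (x,t))^2 + x^m * (pr \<rho> (x,t) * (u (x,t))^2 + 2 * \<rho> (x,t) * u (x,t) * pr u (x,t))"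
  proof -
    have "deriv (\<lambda>s. s^m * \<rho> (s,t) * (u (s,t))^2) x = real m * x^(m-1) * \<rho> (x,t) * (u (x,t))^2 + x^m * (pr \<rho> (x,t) * (u (x,t))^2 + 2 * \<rho> (x,t) * u (x,t) * pr u (x,t))"
      by (rule DERIV_imp_deriv) (auto intro!: derivative_eq_intros dRr dUr simp: algebra_simps)
    then show ?thesis by (simp add: pr_def)
  qed
  have ev: "eventually (\<lambda>s. K * \<rho> (s,t) powr (3::real) = K * (\<rho> (s,t))^3) (nhds x)"
    using ev_r[OF O z] by eventually_elim (use pos in \<open>auto simp: powr_numeral less_imp_le\<close>)
  have a5: "pr (\<lambda>w. K * \<rho> w powr (3::real)) (x,t) = 3 * K * (\<rho> (x,t))^2 * pr \<rho> (x,t)"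
  proof -
    have "deriv (\<lambda>s. K * \<rho> (s,t) powr (3::real)) x = 3 * K * (\<rho> (x,t))^2 * pr \<rho> (x,t)"
      by (rule deriv_ev[OF ev]) (auto intro!: derivative_eq_intros dRr simp: algebra_simps)
    then show ?thesis by (simp add: pr_def)
  qed
  have xm: "x^m = x * x^(m-1)" if "m > 0" using that by (cases m) auto
  have P1: "x^m * (pt \<rho> (x,t) + (pr \<rho> (x,t) * u (x,t) + \<rho> (x,t) * pr u (x,t) + real m * \<rho> (x,t) * u (x,t) / x)) = 0"
  proof (cases "m = 0")
    case True then show ?thesis using E1 a1 a2 by (simp add: algebra_simps)
  next
    case False then show ?thesis using E1 a1 a2 x xm by (simp add: algebra_simps)
  qed
  then show P1': "pt \<rho> (x,t) = -(pr \<rho> (x,t) * u (x,t) + \<rho> (x,t) * pr u (x,t) + real m * \<rho> (x,t) * u (x,t) / x)"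
    using x by simp
  have "x^m * (\<rho> (x,t) * (pt u (x,t) + (u (x,t) * pr u (x,t) + 3 * K * \<rho> (x,t) * pr \<rho> (x,t)))) = 0"
  proof (cases "m = 0")
    case True then show ?thesis using E2 a3 a4 a5 P1' by (simp add: algebra_simps power2_eq_square)
  next
    case False then show ?thesis using E2 a3 a4 a5 P1' x xm by (simp add: algebra_simps power2_eq_square)
  qed
  then show "pt u (x,t) = -(u (x,t) * pr u (x,t) + 3 * K * \<rho> (x,t) * pr \<rho> (x,t))"
    using x r by simp
qed



lemma no_CR:
  assumes d: "(G has_real_derivative D) (at ts)" and D: "D < 0"
  shows "\<not> change_C_to_R G ts \<epsilon>"
proof
  assume ch: "change_C_to_R G ts \<epsilon>"
  obtain d where dd: "d > 0" "\<forall>h>0. h < d \<longrightarrow> G (ts + h) < G ts" using DERIV_neg_dec_right[OF d D] by blast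
  define h where "h = min d \<epsilon> / 2"
  have h: "h > 0" "h < d" "h < \<epsilon>" using dd ch unfolding h_def change_C_to_R_def by auto
  have "G (ts + h) < 0" using dd h ch unfolding change_C_to_R_def by auto
  moreover have "G (ts + h) > 0" using h ch unfolding change_C_to_R_def by auto
  ultimately show False by simp
qed

lemma no_RC:
  assumes d: "(G has_real_derivative D) (at ts)" and D: "D > 0"
  shows "\<not> change_R_to_C G ts \<epsilon>"
proof
  assume ch: "change_R_to_C G ts \<epsilon>"
  obtain d where dd: "d > 0" "\<forall>h>0. h < d \<longrightarrow> G ts < G (ts + h)" using DERIV_pos_inc_right[OF d D] by blast
  define h where "h = min d \<epsilon> / 2"
  have h: "h > 0" "h < d" "h < \<epsilon>" using dd ch unfolding h_def change_R_to_C_def by auto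
  have "G (ts + h) > 0" using dd h ch unfolding change_R_to_C_def by auto
  moreover have "G (ts + h) < 0" using h ch unfolding change_R_to_C_def by auto
  ultimately show False by simp
qed

lemma along:
  fixes u \<rho> :: "real \<times> real \<Rightarrow> real" and \<psi> G :: "real \<Rightarrow> real" and m c :: real
  assumes O: "open \<Omega>" and pos: "\<forall>z\<in>\<Omega>. fst z > 0" and su: "smooth_on \<Omega> u" and sr: "smooth_on \<Omega> \<rho>"
    and P1: "\<forall>z\<in>\<Omega>. pt \<rho> z = -(pr \<rho> z * u z + \<rho> z * pr u z + m * \<rho> z * u z / fst z)"
    and P2: "\<forall>z\<in>\<Omega>. pt u z = -(u z * pr u z + c^2 * \<rho> z * pr \<rho> z)"
    and J: "\<forall>t\<in>J. (\<psi> t, t) \<in> \<Omega>" and sub: "{ts - \<epsilon><..<ts + \<epsilon>} \<subseteq> J" and e: "\<epsilon> > 0"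
    and d\<psi>: "(\<psi> has_real_derivative (u (\<psi> ts,ts) + c*\<rho> (\<psi> ts,ts))) (at ts within J)"
    and w: "u (\<psi> ts,ts) + c*\<rho> (\<psi> ts,ts) \<noteq> 0" and z: "u (\<psi> ts,ts) - c*\<rho> (\<psi> ts,ts) \<noteq> 0"
    and G: "\<forall>t\<in>J. G t = pr u (\<psi> t,t) + c*pr \<rho> (\<psi> t,t) + m/\<psi> t*(c*\<rho> (\<psi> t,t)*u (\<psi> t,t)/(u (\<psi> t,t) + c*\<rho> (\<psi> t,t)))"
    and G0: "G ts = 0"
  shows "(G has_real_derivative
      m*(u (\<psi> ts,ts) - c*\<rho> (\<psi> ts,ts))^2*(pr u (\<psi> ts,ts) - c*pr \<rho> (\<psi> ts,ts)
        - m/\<psi> ts*(c*\<rho> (\<psi> ts,ts)*u (\<psi> ts,ts)/(u (\<psi> ts,ts) - c*\<rho> (\<psi> ts,ts))))/(2*\<psi> ts*(u (\<psi> ts,ts)+c*\<rho> (\<psi> ts,ts)))) (at ts)"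
proof -
  have tsI: "ts \<in> {ts - \<epsilon><..<ts + \<epsilon>}" using e by simp
  have tsJ: "ts \<in> J" using tsI sub by blast
  have "ts \<in> interior J" using interior_maximal[OF sub open_greaterThanLessThan] tsI by blast
  then have d: "(\<psi> has_real_derivative (u (\<psi> ts,ts) + c*\<rho> (\<psi> ts,ts))) (at ts)"
    using d\<psi> at_within_interior by metis
  have z0: "(\<psi> ts, ts) \<in> \<Omega>" using J tsJ by blast
  have A0: "pr u (\<psi> ts,ts) + c*pr \<rho> (\<psi> ts,ts) + m/\<psi> ts*(c*\<rho> (\<psi> ts,ts)*u (\<psi> ts,ts)/(u (\<psi> ts,ts) + c*\<rho> (\<psi> ts,ts))) = 0"
    using G G0 tsJ by metis
  note cr = core[OF O pos su sr P1 P2 z0 d w z A0]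
  have ev: "eventually (\<lambda>t. G t = pr u (\<psi> t,t) + c*pr \<rho> (\<psi> t,t) + m/\<psi> t*(c*\<rho> (\<psi> t,t)*u (\<psi> t,t)/(u (\<psi> t,t) + c*\<rho> (\<psi> t,t)))) (nhds ts)"
    using eventually_nhds_in_open[OF open_greaterThanLessThan tsI] by eventually_elim (use G sub in blast)
  show ?thesis using DERIV_cong_ev[OF refl ev refl] cr by simp
qed



theorem mainTheorem5:
  fixes m :: nat and K \<gamma> :: real and \<Omega> :: "(real \<times> real) set"
    and \<rho> u :: "real \<times> real \<Rightarrow> real"
  assumes m: "m \<in> {1, 2}" and K: "K > 0" and g3: "\<gamma> = 3"
    and sol: "euler_solution m K \<gamma> \<Omega> \<rho> u"
    and super: "\<forall>z\<in>\<Omega>. c1 K \<gamma> \<rho> u z < c2 K \<gamma> \<rho> u z \<and> c2 K \<gamma> \<rho> u z < 0"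
  shows
    "(\<forall>J r0 \<psi> ts \<epsilon>. char_curve \<Omega> (c2 K \<gamma> \<rho> u) J r0 \<psi> \<and> {ts - \<epsilon><..<ts + \<epsilon>} \<subseteq> J
        \<and> beta m K \<gamma> \<rho> u (\<psi> ts, ts) > 0
        \<longrightarrow> \<not> change_C_to_R (\<lambda>t. alpha m K \<gamma> \<rho> u (\<psi> t, t)) ts \<epsilon>)
   \<and> (\<forall>J r0 \<xi> ts \<epsilon>. char_curve \<Omega> (c1 K \<gamma> \<rho> u) J r0 \<xi> \<and> {ts - \<epsilon><..<ts + \<epsilon>} \<subseteq> J
        \<and> alpha m K \<gamma> \<rho> u (\<xi> ts, ts) > 0
        \<longrightarrow> \<not> change_C_to_R (\<lambda>t. beta m K \<gamma> \<rho> u (\<xi> t, t)) ts \<epsilon>)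
   \<and> (\<forall>J r0 \<psi> ts \<epsilon>. char_curve \<Omega> (c2 K \<gamma> \<rho> u) J r0 \<psi> \<and> {ts - \<epsilon><..<ts + \<epsilon>} \<subseteq> J
        \<and> beta m K \<gamma> \<rho> u (\<psi> ts, ts) < 0
        \<longrightarrow> \<not> change_R_to_C (\<lambda>t. alpha m K \<gamma> \<rho> u (\<psi> t, t)) ts \<epsilon>)
   \<and> (\<forall>J r0 \<xi> ts \<epsilon>. char_curve \<Omega> (c1 K \<gamma> \<rho> u) J r0 \<xi> \<and> {ts - \<epsilon><..<ts + \<epsilon>} \<subseteq> J
        \<and> alpha m K \<gamma> \<rho> u (\<xi> ts, ts) < 0
        \<longrightarrow> \<not> change_R_to_C (\<lambda>t. beta m K \<gamma> \<rho> u (\<xi> t, t)) ts \<epsilon>)"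
proof -
  have O: "open \<Omega>" and pos2: "\<forall>z\<in>\<Omega>. fst z > 0 \<and> \<rho> z > 0" and su: "smooth_on \<Omega> u" and sr: "smooth_on \<Omega> \<rho>"
    and pde: "\<forall>z\<in>\<Omega>.
        pt (\<lambda>(r, t). r ^ m * \<rho> (r, t)) z + pr (\<lambda>(r, t). r ^ m * \<rho> (r, t) * u (r, t)) z = 0 \<and>
        pt (\<lambda>(r, t). r ^ m * \<rho> (r, t) * u (r, t)) z
          + pr (\<lambda>(r, t). r ^ m * \<rho> (r, t) * (u (r, t))\<^sup>2) z
          + (fst z) ^ m * pr (\<lambda>w. K * \<rho> w powr (3::real)) z = 0"
    using sol g3 unfolding euler_solution_def by auto
  have pos: "\<forall>z\<in>\<Omega>. fst z > 0" using pos2 by blast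
  define c0 where "c0 = sqrt (K * 3)"
  have c0: "c0 > 0" "c0^2 = 3 * K" using K by (auto simp: c0_def)
  have P1: "\<forall>z\<in>\<Omega>. pt \<rho> z = -(pr \<rho> z * u z + \<rho> z * pr u z + real m * \<rho> z * u z / fst z)"
  proof
    fix z assume z: "z \<in> \<Omega>"
    obtain x t where zz: "z = (x,t)" by (cases z)
    show "pt \<rho> z = -(pr \<rho> z * u z + \<rho> z * pr u z + real m * \<rho> z * u z / fst z)"
      using pde_reduce(1)[OF O z[unfolded zz] pos2 su sr] pde z unfolding zz by auto
  qed
  have P2: "\<forall>z\<in>\<Omega>. pt u z = -(u z * pr u z + c^2 * \<rho> z * pr \<rho> z)" if "c^2 = 3 * K" for c
  proof
    fix z assume z: "z \<in> \<Omega>"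
    obtain x t where zz: "z = (x,t)" by (cases z)
    show "pt u z = -(u z * pr u z + c^2 * \<rho> z * pr \<rho> z)"
      using pde_reduce(2)[OF O z[unfolded zz] pos2 su sr] pde z that unfolding zz by auto
  qed
  have hh: "hh K \<gamma> \<rho> z = c0 * \<rho> z" if "z \<in> \<Omega>" for z
    using pos2 that g3 by (auto simp: hh_def c0_def)
  have prhh: "pr (hh K \<gamma> \<rho>) z = c0 * pr \<rho> z" if z: "z \<in> \<Omega>" for z
  proof -
    obtain x t where zz: "z = (x,t)" by (cases z)
    have ev: "eventually (\<lambda>s. hh K \<gamma> \<rho> (s,t) = c0 * \<rho> (s,t)) (nhds x)"
      using ev_r[OF O z[unfolded zz]] by eventually_elim (use hh in blast)
    have "deriv (\<lambda>s. hh K \<gamma> \<rho> (s,t)) x = c0 * pr \<rho> (x,t)"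
      by (rule deriv_ev[OF ev]) (auto intro!: derivative_eq_intros pr_deriv smooth_diff[OF sr O z[unfolded zz]])
    then show ?thesis unfolding zz by (simp add: pr_def)
  qed
  have C2: "c2 K \<gamma> \<rho> u z = u z + c0 * \<rho> z" if "z \<in> \<Omega>" for z using hh[OF that] by (simp add: c2_def)
  have C1: "c1 K \<gamma> \<rho> u z = u z - c0 * \<rho> z" if "z \<in> \<Omega>" for z using hh[OF that] by (simp add: c1_def)
  have sup: "u z + c0 * \<rho> z < 0 \<and> u z - c0 * \<rho> z < 0" if "z \<in> \<Omega>" for z
    using super that C1[OF that] C2[OF that] by auto
  have AL: "alpha m K \<gamma> \<rho> u z = pr u z + c0 * pr \<rho> z + real m / fst z * (c0 * \<rho> z * u z / (u z + c0 * \<rho> z))"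
    if "z \<in> \<Omega>" for z
    using that hh[OF that] prhh[OF that] C2[OF that] g3 by (simp add: alpha_def)
  have BE: "beta m K \<gamma> \<rho> u z = pr u z - c0 * pr \<rho> z - real m / fst z * (c0 * \<rho> z * u z / (u z - c0 * \<rho> z))"
    if "z \<in> \<Omega>" for z
    using that hh[OF that] prhh[OF that] C1[OF that] g3 by (simp add: beta_def)
  have mpos: "real m > 0" using m by auto
  have D2: "((\<lambda>t. alpha m K \<gamma> \<rho> u (\<psi> t, t)) has_real_derivative
      real m*(u (\<psi> ts,ts) - c0*\<rho> (\<psi> ts,ts))^2*beta m K \<gamma> \<rho> u (\<psi> ts, ts)/(2*\<psi> ts*(u (\<psi> ts,ts)+c0*\<rho> (\<psi> ts,ts)))) (at ts)
     \<and> (\<psi> ts, ts) \<in> \<Omega>"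
    if H: "char_curve \<Omega> (c2 K \<gamma> \<rho> u) J r0 \<psi>" "{ts - \<epsilon><..<ts + \<epsilon>} \<subseteq> J" "\<epsilon> > 0"
      "alpha m K \<gamma> \<rho> u (\<psi> ts, ts) = 0" for J r0 \<psi> ts \<epsilon>
  proof -
    have tsJ: "ts \<in> J" using H by auto
    have Jc: "\<forall>t\<in>J. (\<psi> t, t) \<in> \<Omega>" using H by (simp add: char_curve_def)
    have z0: "(\<psi> ts, ts) \<in> \<Omega>" using Jc tsJ by blast
    have d: "(\<psi> has_real_derivative (u (\<psi> ts,ts) + c0*\<rho> (\<psi> ts,ts))) (at ts within J)"
    proof -
      have "(\<psi> has_real_derivative c2 K \<gamma> \<rho> u (\<psi> ts,ts)) (at ts within J)"
        using H(1) tsJ unfolding char_curve_def by blast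
      then show ?thesis using C2[OF z0] by simp
    qed
    note s = sup[OF z0]
    have G: "\<forall>t\<in>J. alpha m K \<gamma> \<rho> u (\<psi> t, t) = pr u (\<psi> t,t) + c0*pr \<rho> (\<psi> t,t) + real m/\<psi> t*(c0*\<rho> (\<psi> t,t)*u (\<psi> t,t)/(u (\<psi> t,t) + c0*\<rho> (\<psi> t,t)))"
      using AL Jc by simp
    note dd = along[OF O pos su sr P1 P2[OF c0(2)] Jc H(2) H(3) d _ _ G H(4)]
    have "((\<lambda>t. alpha m K \<gamma> \<rho> u (\<psi> t, t)) has_real_derivative
      real m*(u (\<psi> ts,ts) - c0*\<rho> (\<psi> ts,ts))^2*(pr u (\<psi> ts,ts) - c0*pr \<rho> (\<psi> ts,ts)
        - real m/\<psi> ts*(c0*\<rho> (\<psi> ts,ts)*u (\<psi> ts,ts)/(u (\<psi> ts,ts) - c0*\<rho> (\<psi> ts,ts))))/(2*\<psi> ts*(u (\<psi> ts,ts)+c0*\<rho> (\<psi> ts,ts)))) (at ts)"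
      using s by (intro dd) auto
    then show ?thesis using BE[OF z0] z0 by simp
  qed
  have D1: "((\<lambda>t. beta m K \<gamma> \<rho> u (\<xi> t, t)) has_real_derivative
      real m*(u (\<xi> ts,ts) + c0*\<rho> (\<xi> ts,ts))^2*alpha m K \<gamma> \<rho> u (\<xi> ts, ts)/(2*\<xi> ts*(u (\<xi> ts,ts)-c0*\<rho> (\<xi> ts,ts)))) (at ts)
     \<and> (\<xi> ts, ts) \<in> \<Omega>"
    if H: "char_curve \<Omega> (c1 K \<gamma> \<rho> u) J r0 \<xi>" "{ts - \<epsilon><..<ts + \<epsilon>} \<subseteq> J" "\<epsilon> > 0"
      "beta m K \<gamma> \<rho> u (\<xi> ts, ts) = 0" for J r0 \<xi> ts \<epsilon>
  proof -
    have tsJ: "ts \<in> J" using H by auto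
    have Jc: "\<forall>t\<in>J. (\<xi> t, t) \<in> \<Omega>" using H by (simp add: char_curve_def)
    have z0: "(\<xi> ts, ts) \<in> \<Omega>" using Jc tsJ by blast
    have d: "(\<xi> has_real_derivative (u (\<xi> ts,ts) + (-c0)*\<rho> (\<xi> ts,ts))) (at ts within J)"
    proof -
      have "(\<xi> has_real_derivative c1 K \<gamma> \<rho> u (\<xi> ts,ts)) (at ts within J)"
        using H(1) tsJ unfolding char_curve_def by blast
      then show ?thesis using C1[OF z0] by simp
    qed
    note s = sup[OF z0]
    have G: "\<forall>t\<in>J. beta m K \<gamma> \<rho> u (\<xi> t, t) = pr u (\<xi> t,t) + (-c0)*pr \<rho> (\<xi> t,t) + real m/\<xi> t*((-c0)*\<rho> (\<xi> t,t)*u (\<xi> t,t)/(u (\<xi> t,t) + (-c0)*\<rho> (\<xi> t,t)))"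
      using BE Jc by simp
    have c0': "(-c0)^2 = 3 * K" using c0 by simp
    note dd = along[OF O pos su sr P1 P2[OF c0'] Jc H(2) H(3) d _ _ G H(4)]
    have "((\<lambda>t. beta m K \<gamma> \<rho> u (\<xi> t, t)) has_real_derivative
      real m*(u (\<xi> ts,ts) - (-c0)*\<rho> (\<xi> ts,ts))^2*(pr u (\<xi> ts,ts) - (-c0)*pr \<rho> (\<xi> ts,ts)
        - real m/\<xi> ts*((-c0)*\<rho> (\<xi> ts,ts)*u (\<xi> ts,ts)/(u (\<xi> ts,ts) - (-c0)*\<rho> (\<xi> ts,ts))))/(2*\<xi> ts*(u (\<xi> ts,ts)+(-c0)*\<rho> (\<xi> ts,ts)))) (at ts)"
      using s by (intro dd) auto
    then show ?thesis using AL[OF z0] z0 by simp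
  qed
  show ?thesis
  proof (intro conjI allI impI)
    fix J r0 \<psi> ts \<epsilon>
    assume H: "char_curve \<Omega> (c2 K \<gamma> \<rho> u) J r0 \<psi> \<and> {ts - \<epsilon><..<ts + \<epsilon>} \<subseteq> J \<and> 0 < beta m K \<gamma> \<rho> u (\<psi> ts, ts)"
    show "\<not> change_C_to_R (\<lambda>t. alpha m K \<gamma> \<rho> u (\<psi> t, t)) ts \<epsilon>"
    proof
      assume ch: "change_C_to_R (\<lambda>t. alpha m K \<gamma> \<rho> u (\<psi> t, t)) ts \<epsilon>"
      have e: "\<epsilon> > 0" "alpha m K \<gamma> \<rho> u (\<psi> ts, ts) = 0" using ch by (auto simp: change_C_to_R_def)
      note dd = D2[OF conjunct1[OF H] conjunct1[OF conjunct2[OF H]] e]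
      note s = sup[OF conjunct2[OF dd]]
      have "u (\<psi> ts,ts) - c0*\<rho> (\<psi> ts,ts) \<noteq> 0" using s by simp
      then have num: "real m*(u (\<psi> ts,ts) - c0*\<rho> (\<psi> ts,ts))^2*beta m K \<gamma> \<rho> u (\<psi> ts, ts) > 0"
        using mpos H by simp
      have den: "2*\<psi> ts*(u (\<psi> ts,ts)+c0*\<rho> (\<psi> ts,ts)) < 0"
        using s pos conjunct2[OF dd] by (auto intro!: mult_pos_neg)
      show False using no_CR[OF conjunct1[OF dd] divide_pos_neg[OF num den]] ch by blast
    qed
  next
    fix J r0 \<xi> ts \<epsilon>
    assume H: "char_curve \<Omega> (c1 K \<gamma> \<rho> u) J r0 \<xi> \<and> {ts - \<epsilon><..<ts + \<epsilon>} \<subseteq> J \<and> 0 < alpha m K \<gamma> \<rho> u (\<xi> ts, ts)"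
    show "\<not> change_C_to_R (\<lambda>t. beta m K \<gamma> \<rho> u (\<xi> t, t)) ts \<epsilon>"
    proof
      assume ch: "change_C_to_R (\<lambda>t. beta m K \<gamma> \<rho> u (\<xi> t, t)) ts \<epsilon>"
      have e: "\<epsilon> > 0" "beta m K \<gamma> \<rho> u (\<xi> ts, ts) = 0" using ch by (auto simp: change_C_to_R_def)
      note dd = D1[OF conjunct1[OF H] conjunct1[OF conjunct2[OF H]] e]
      note s = sup[OF conjunct2[OF dd]]
      have "u (\<xi> ts,ts) + c0*\<rho> (\<xi> ts,ts) \<noteq> 0" using s by simp
      then have num: "real m*(u (\<xi> ts,ts) + c0*\<rho> (\<xi> ts,ts))^2*alpha m K \<gamma> \<rho> u (\<xi> ts, ts) > 0"
        using mpos H by simp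
      have den: "2*\<xi> ts*(u (\<xi> ts,ts)-c0*\<rho> (\<xi> ts,ts)) < 0"
        using s pos conjunct2[OF dd] by (auto intro!: mult_pos_neg)
      show False using no_CR[OF conjunct1[OF dd] divide_pos_neg[OF num den]] ch by blast
    qed
  next
    fix J r0 \<psi> ts \<epsilon>
    assume H: "char_curve \<Omega> (c2 K \<gamma> \<rho> u) J r0 \<psi> \<and> {ts - \<epsilon><..<ts + \<epsilon>} \<subseteq> J \<and> beta m K \<gamma> \<rho> u (\<psi> ts, ts) < 0"
    show "\<not> change_R_to_C (\<lambda>t. alpha m K \<gamma> \<rho> u (\<psi> t, t)) ts \<epsilon>"
    proof
      assume ch: "change_R_to_C (\<lambda>t. alpha m K \<gamma> \<rho> u (\<psi> t, t)) ts \<epsilon>"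
      have e: "\<epsilon> > 0" "alpha m K \<gamma> \<rho> u (\<psi> ts, ts) = 0" using ch by (auto simp: change_R_to_C_def)
      note dd = D2[OF conjunct1[OF H] conjunct1[OF conjunct2[OF H]] e]
      note s = sup[OF conjunct2[OF dd]]
      have "u (\<psi> ts,ts) - c0*\<rho> (\<psi> ts,ts) \<noteq> 0" using s by simp
      then have num: "real m*(u (\<psi> ts,ts) - c0*\<rho> (\<psi> ts,ts))^2*beta m K \<gamma> \<rho> u (\<psi> ts, ts) < 0"
        using mpos H by (simp add: mult_pos_neg)
      have den: "2*\<psi> ts*(u (\<psi> ts,ts)+c0*\<rho> (\<psi> ts,ts)) < 0"
        using s pos conjunct2[OF dd] by (auto intro!: mult_pos_neg)
      show False using no_RC[OF conjunct1[OF dd] divide_neg_neg[OF num den]] ch by blast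
    qed
  next
    fix J r0 \<xi> ts \<epsilon>
    assume H: "char_curve \<Omega> (c1 K \<gamma> \<rho> u) J r0 \<xi> \<and> {ts - \<epsilon><..<ts + \<epsilon>} \<subseteq> J \<and> alpha m K \<gamma> \<rho> u (\<xi> ts, ts) < 0"
    show "\<not> change_R_to_C (\<lambda>t. beta m K \<gamma> \<rho> u (\<xi> t, t)) ts \<epsilon>"
    proof
      assume ch: "change_R_to_C (\<lambda>t. beta m K \<gamma> \<rho> u (\<xi> t, t)) ts \<epsilon>"
      have e: "\<epsilon> > 0" "beta m K \<gamma> \<rho> u (\<xi> ts, ts) = 0" using ch by (auto simp: change_R_to_C_def)
      note dd = D1[OF conjunct1[OF H] conjunct1[OF conjunct2[OF H]] e]
      note s = sup[OF conjunct2[OF dd]]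
      have "u (\<xi> ts,ts) + c0*\<rho> (\<xi> ts,ts) \<noteq> 0" using s by simp
      then have num: "real m*(u (\<xi> ts,ts) + c0*\<rho> (\<xi> ts,ts))^2*alpha m K \<gamma> \<rho> u (\<xi> ts, ts) < 0"
        using mpos H by (simp add: mult_pos_neg)
      have den: "2*\<xi> ts*(u (\<xi> ts,ts)-c0*\<rho> (\<xi> ts,ts)) < 0"
        using s pos conjunct2[OF dd] by (auto intro!: mult_pos_neg)
      show False using no_RC[OF conjunct1[OF dd] divide_neg_neg[OF num den]] ch by blast
    qed
  qed
qed
end
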